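(* Under the hypotheses that $\mathcal M$ is unichain and indexable and $\widehat{\mathcal M}$ has the same rewards and same support as $\mathcal M$ and satisfies Assumption (A): for every compact interval $[a,b]\subset\mathbb R$ there exists a constant $c_\lambda$ depending only on $\mathcal M$, $a$ and $b$ such that for every state $s$ and every policy $\pi\subseteq\mathcal S$, $$\max_{\lambda\in[a,b]}|\alpha^\pi_s(\lambda)-\hat\alpha^\pi_s(\lambda)|\le c_\lambda\|\mathcal M-\widehat{\mathcal M}\|_\infty.$$
   Context: Setting. An MDP is $\mathcal M=(\mathcal S,\{0,1\},(P^a)_a,(r^a)_a)$, finite $\mathcal S$, row-stochastic $P^0,P^1$, rewards $r^0,r^1\in\mathbb R^{\mathcal S}$. A policy is a subset $\pi\subseteq\mathcal S$ of states where action 1 is played, inducing $P^\pi$, $r^\pi$; $\mathcal M$ is unichain if every $P^\pi$ has a single recurrent class. For $\lambda\in\mathbb R$, $\mathcal M(\lambda)$ has the same transitions and rewards $r^1-\lambda\mathbf 1$ (action 1), $r^0$ (action 0). For a unichain policy, bias $b^\pi(\lambda)$ (up to additive constant) solves $g^\pi\mathbf 1+b^\pi=r^\pi+P^\pi b^\pi$ in $\mathcal M(\lambda)$; activation advantage $\alpha^\pi_s(\lambda)=r^1_s-\lambda-r^0_s+(P^1_{s,\cdot}-P^0_{s,\cdot})\cdot b^\pi(\lambda)$. BO (bias optimal) policy in $\mathcal M(\lambda)$: gain optimal and bias-maximal among gain-optimal policies; for unichain MDPs, $\pi$ is BO iff $\alpha^\pi_s(\lambda)\ge0$ for $s\in\pi$,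 $\le0$ for $s\notin\pi$. $\alpha^*_s(\lambda)$ is $\alpha^\pi_s(\lambda)$ for any BO $\pi$. $\mathcal M$ indexable: for each $s$ there is $\lambda_s$ (Whittle index) with $\alpha^*_s(\lambda)>0$ for $\lambda<\lambda_s$, $<0$ for $\lambda>\lambda_s$. Hats denote objects in $\widehat{\mathcal M}=(\mathcal S,\{0,1\},(\hat P^a)_a,(r^a)_a)$ (and $\widehat{\mathcal M}(\lambda)$). $\|A\|_\infty=\max_s\sum_{s'}|A_{s,s'}|$; $\|\mathcal M-\widehat{\mathcal M}\|_\infty=\max_a\|P^a-\hat P^a\|_\infty$. Same support: $P^a_{s,s'}>0\iff\hat P^a_{s,s'}>0$. Diameter of unichain $P$ with recurrent class $\mathcal S_r$: $D(P)=\max_{s\in\mathcal S,s'\in\mathcal S_r}\mathbb E^P[\tau_{s,s'}]$. Assumption (A): $\|\mathcal M-\widehat{\mathcal M}\|_\infty\le\min\{1/\max_\pi D(P^\pi),\ \tfrac12\min\{|\lambda_s-\lambda_{s'}|:\lambda_s\ne\lambda_{s'}\}\}$. *)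

theory Defs
  imports Complex_Main
begin

text \<open>
  Actions: bool (False = action 0, True = action 1).
  Transitions: P :: bool => 's => 's => real, P a s s' = P^a_{s,s'}.  A policy is a set pol of states (action 1 there).
\<close>

definition stochastic :: "('s::finite \<Rightarrow> 's \<Rightarrow> real) \<Rightarrow> bool" where
  "stochastic Q \<longleftrightarrow> (\<forall>x y. Q x y \<ge> 0) \<and> (\<forall>x. (\<Sum>y\<in>UNIV. Q x y) = 1)"

definition mdp_stochastic :: "(bool \<Rightarrow> 's::finite \<Rightarrow> 's \<Rightarrow> real) \<Rightarrow> bool" where
  "mdp_stochastic P \<longleftrightarrow> (\<forall>a. stochastic (P a))"

definition pol_mat :: "(bool \<Rightarrow> 's \<Rightarrow> 's \<Rightarrow> real) \<Rightarrow> 's set \<Rightarrow> 's \<Rightarrow> 's \<Rightarrow> real" where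
  "pol_mat P pol x y = P (x \<in> pol) x y"

definition pol_rew :: "(bool \<Rightarrow> 's \<Rightarrow> real) \<Rightarrow> real \<Rightarrow> 's set \<Rightarrow> 's \<Rightarrow> real" where
  "pol_rew r lam pol x = (if x \<in> pol then r True x - lam else r False x)"

definition reach :: "('s \<Rightarrow> 's \<Rightarrow> real) \<Rightarrow> 's \<Rightarrow> 's \<Rightarrow> bool" where
  "reach Q x y \<longleftrightarrow> (x, y) \<in> {(u, v). Q u v > 0}\<^sup>*"

definition recurrent :: "('s \<Rightarrow> 's \<Rightarrow> real) \<Rightarrow> 's \<Rightarrow> bool" where
  "recurrent Q x \<longleftrightarrow> (\<forall>y. reach Q x y \<longrightarrow> reach Q y x)"

text \<open>Single recurrent class: all recurrent states communicate (there is always at least one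
  recurrent state in a finite chain).\<close>
definition unichain_mat :: "('s \<Rightarrow> 's \<Rightarrow> real) \<Rightarrow> bool" where
  "unichain_mat Q \<longleftrightarrow> (\<forall>x y. recurrent Q x \<and> recurrent Q y \<longrightarrow> reach Q x y)"

definition unichain :: "(bool \<Rightarrow> 's \<Rightarrow> 's \<Rightarrow> real) \<Rightarrow> bool" where
  "unichain P \<longleftrightarrow> (\<forall>pol. unichain_mat (pol_mat P pol))"

text \<open>Stationary distribution (unique for unichain chains), gain and normalised bias.\<close>
definition stat_dist :: "('s::finite \<Rightarrow> 's \<Rightarrow> real) \<Rightarrow> 's \<Rightarrow> real" where
  "stat_dist Q = (SOME mu. (\<forall>x. mu x \<ge> 0) \<and> (\<Sum>x\<in>UNIV. mu x) = 1 \<and>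
                          (\<forall>y. (\<Sum>x\<in>UNIV. mu x * Q x y) = mu y))"

definition gain :: "(bool \<Rightarrow> 's::finite \<Rightarrow> 's \<Rightarrow> real) \<Rightarrow> (bool \<Rightarrow> 's \<Rightarrow> real) \<Rightarrow> real \<Rightarrow> 's set \<Rightarrow> real" where
  "gain P r lam pol = (\<Sum>x\<in>UNIV. stat_dist (pol_mat P pol) x * pol_rew r lam pol x)"

text \<open>Bias: solution of g 1 + b = r + P b, normalised by mu . b = 0
  (the advantage does not depend on the additive constant).\<close>
definition bias :: "(bool \<Rightarrow> 's::finite \<Rightarrow> 's \<Rightarrow> real) \<Rightarrow> (bool \<Rightarrow> 's \<Rightarrow> real) \<Rightarrow> real \<Rightarrow> 's set \<Rightarrow> 's \<Rightarrow> real" where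
  "bias P r lam pol = (SOME b.
      (\<forall>x. gain P r lam pol + b x = pol_rew r lam pol x + (\<Sum>y\<in>UNIV. pol_mat P pol x y * b y)) \<and>
      (\<Sum>x\<in>UNIV. stat_dist (pol_mat P pol) x * b x) = 0)"

definition adv :: "(bool \<Rightarrow> 's::finite \<Rightarrow> 's \<Rightarrow> real) \<Rightarrow> (bool \<Rightarrow> 's \<Rightarrow> real) \<Rightarrow> 's set \<Rightarrow> 's \<Rightarrow> real \<Rightarrow> real" where
  "adv P r pol s lam = r True s - lam - r False s +
      (\<Sum>y\<in>UNIV. (P True s y - P False s y) * bias P r lam pol y)"

definition bias_optimal :: "(bool \<Rightarrow> 's::finite \<Rightarrow> 's \<Rightarrow> real) \<Rightarrow> (bool \<Rightarrow> 's \<Rightarrow> real) \<Rightarrow> real \<Rightarrow> 's set \<Rightarrow> bool" where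
  "bias_optimal P r lam pol \<longleftrightarrow>
     (\<forall>pol'. gain P r lam pol' \<le> gain P r lam pol) \<and>
     (\<forall>pol'. gain P r lam pol' = gain P r lam pol \<longrightarrow> (\<forall>x. bias P r lam pol' x \<le> bias P r lam pol x))"

definition is_whittle_index :: "(bool \<Rightarrow> 's::finite \<Rightarrow> 's \<Rightarrow> real) \<Rightarrow> (bool \<Rightarrow> 's \<Rightarrow> real) \<Rightarrow> 's \<Rightarrow> real \<Rightarrow> bool" where
  "is_whittle_index P r s l \<longleftrightarrow>
     (\<forall>lam pol. bias_optimal P r lam pol \<longrightarrow>
        (lam < l \<longrightarrow> adv P r pol s lam > 0) \<and> (lam > l \<longrightarrow> adv P r pol s lam < 0))"

definition indexable :: "(bool \<Rightarrow> 's::finite \<Rightarrow> 's \<Rightarrow> real) \<Rightarrow> (bool \<Rightarrow> 's \<Rightarrow> real) \<Rightarrow> bool" where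
  "indexable P r \<longleftrightarrow> (\<forall>s. \<exists>l. is_whittle_index P r s l)"

definition whittle :: "(bool \<Rightarrow> 's::finite \<Rightarrow> 's \<Rightarrow> real) \<Rightarrow> (bool \<Rightarrow> 's \<Rightarrow> real) \<Rightarrow> 's \<Rightarrow> real" where
  "whittle P r s = (THE l. is_whittle_index P r s l)"

text \<open>Expected hitting time E[tau_{x,y}], tau = min{t >= 0 : X_t = y}, computed as
  sum_t Pr(tau > t) using taboo probabilities (paths avoiding y).\<close>
fun taboo_pow :: "('s::finite \<Rightarrow> 's \<Rightarrow> real) \<Rightarrow> 's \<Rightarrow> nat \<Rightarrow> 's \<Rightarrow> 's \<Rightarrow> real" where
  "taboo_pow Q y 0 u v = (if u = v \<and> u \<noteq> y then 1 else 0)"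
| "taboo_pow Q y (Suc t) u v =
     (if v = y then 0 else (\<Sum>w\<in>UNIV. taboo_pow Q y t u w * Q w v))"

definition hit_time :: "('s::finite \<Rightarrow> 's \<Rightarrow> real) \<Rightarrow> 's \<Rightarrow> 's \<Rightarrow> real" where
  "hit_time Q x y = (\<Sum>t. \<Sum>v\<in>UNIV. taboo_pow Q y t x v)"

definition diameter :: "('s::finite \<Rightarrow> 's \<Rightarrow> real) \<Rightarrow> real" where
  "diameter Q = Max {hit_time Q x y | x y. recurrent Q y}"

definition max_diameter :: "(bool \<Rightarrow> 's::finite \<Rightarrow> 's \<Rightarrow> real) \<Rightarrow> real" where
  "max_diameter P = Max {diameter (pol_mat P pol) | pol. True}"

definition mat_inf_norm :: "('s::finite \<Rightarrow> 's \<Rightarrow> real) \<Rightarrow> real" where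
  "mat_inf_norm A = Max {(\<Sum>y\<in>UNIV. \<bar>A x y\<bar>) | x. True}"

definition mdp_dist :: "(bool \<Rightarrow> 's::finite \<Rightarrow> 's \<Rightarrow> real) \<Rightarrow> (bool \<Rightarrow> 's \<Rightarrow> 's \<Rightarrow> real) \<Rightarrow> real" where
  "mdp_dist P Q = max (mat_inf_norm (\<lambda>x y. P False x y - Q False x y))
                      (mat_inf_norm (\<lambda>x y. P True x y - Q True x y))"

definition same_support :: "(bool \<Rightarrow> 's \<Rightarrow> 's \<Rightarrow> real) \<Rightarrow> (bool \<Rightarrow> 's \<Rightarrow> 's \<Rightarrow> real) \<Rightarrow> bool" where
  "same_support P Q \<longleftrightarrow> (\<forall>a x y. P a x y > 0 \<longleftrightarrow> Q a x y > 0)"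

text \<open>Assumption (A). The minimum over distinct Whittle-index gaps is +infinity when there
  are no distinct indices; this is encoded by quantifying over pairs with distinct indices.\<close>
definition assumption_A :: "(bool \<Rightarrow> 's::finite \<Rightarrow> 's \<Rightarrow> real) \<Rightarrow> (bool \<Rightarrow> 's \<Rightarrow> real) \<Rightarrow> (bool \<Rightarrow> 's \<Rightarrow> 's \<Rightarrow> real) \<Rightarrow> bool" where
  "assumption_A P r Q \<longleftrightarrow>
     mdp_dist P Q \<le> 1 / max_diameter P \<and>
     (\<forall>s s'. whittle P r s \<noteq> whittle P r s' \<longrightarrow>
        mdp_dist P Q \<le> \<bar>whittle P r s - whittle P r s'\<bar> / 2)"

end

theory Submission
  imports Defs "HOL-Analysis.Analysis"
begin


lemma min_principle:
  fixes Q :: "'s::finite \<Rightarrow> 's \<Rightarrow> real"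
  assumes st: "stochastic Q" and reachz: "\<And>x. reach Q x z"
  and gz: "g z \<ge> 0" and sup: "\<And>x. x \<noteq> z \<Longrightarrow> g x \<ge> (\<Sum>y\<in>UNIV. Q x y * g y)"
  shows "g x \<ge> 0"
proof (rule ccontr)
  assume "\<not> g x \<ge> 0"
  define m where "m = Min (range g)"
  have mle: "\<And>y. m \<le> g y" unfolding m_def by simp
  have "m \<in> range g" unfolding m_def by (rule Min_in) auto
  then obtain x0 where x0: "g x0 = m" by auto
  have mneg: "m < 0" using mle[of x] \<open>\<not> g x \<ge> 0\<close> by linarith
  have "g y = m" if "reach Q x0 y" for y
    using that unfolding reach_def
  proof (induction rule: rtrancl_induct)
    case base thus ?case using x0 by simp
  next
    case (step u v)
    have uz: "u \<noteq> z" using step.IH gz mneg by auto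
    have Q0: "\<And>y. Q u y \<ge> 0" and Q1: "(\<Sum>y\<in>UNIV. Q u y) = 1" using st unfolding stochastic_def by auto
    have "(\<Sum>y\<in>UNIV. Q u y * (g y - m)) = (\<Sum>y\<in>UNIV. Q u y * g y) - m * (\<Sum>y\<in>UNIV. Q u y)"
      by (simp add: algebra_simps sum_subtractf sum_distrib_left sum_distrib_right)
    also have "\<dots> \<le> 0" using sup[OF uz] step.IH Q1 by simp
    finally have le0: "(\<Sum>y\<in>UNIV. Q u y * (g y - m)) \<le> 0" .
    have nn: "\<And>y. Q u y * (g y - m) \<ge> 0" using Q0 mle by simp
    hence "(\<Sum>y\<in>UNIV. Q u y * (g y - m)) = 0" using le0 by (meson antisym sum_nonneg)
    hence "\<forall>y\<in>UNIV. Q u y * (g y - m) = 0" using nn by (subst sum_nonneg_eq_0_iff[symmetric]) auto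
    hence "Q u v * (g v - m) = 0" by simp
    thus ?case using step.hyps(2) by simp
  qed
  hence "g z = m" using reachz[of x0] by simp
  thus False using gz mneg by simp
qed


lemma reach_refl: "reach Q x x" unfolding reach_def by simp
lemma reach_trans: "reach Q x y \<Longrightarrow> reach Q y w \<Longrightarrow> reach Q x w"
  unfolding reach_def by (meson rtrancl_trans)

lemma exists_recurrent_reach:
  fixes Q :: "'s::finite \<Rightarrow> 's \<Rightarrow> real"
  shows "\<exists>y. reach Q x y \<and> recurrent Q y"
proof -
  define R where "R y = {w. reach Q y w}" for y
  have ex: "\<exists>n. \<exists>y. reach Q x y \<and> card (R y) = n" using reach_refl[of Q x] by blast
  define n where "n = (LEAST n. \<exists>y. reach Q x y \<and> card (R y) = n)"
  obtain y where y: "reach Q x y" "card (R y) = n"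
  proof -
    have "\<exists>y. reach Q x y \<and> card (R y) = n"
      unfolding n_def by (rule LeastI_ex) (rule ex)
    thus ?thesis using that by blast
  qed
  have "reach Q w y" if "reach Q y w" for w
  proof -
    have sub: "R w \<subseteq> R y" unfolding R_def using that reach_trans[of Q y w] by blast
    have "n \<le> card (R w)" unfolding n_def
      using y(1) that reach_trans[of Q x y w] by (intro Least_le) blast
    have "card (R w) \<le> card (R y)" using sub by (intro card_mono) auto
    hence "card (R y) = card (R w)" using y(2) \<open>n \<le> card (R w)\<close> by linarith
    hence "R w = R y" using sub by (intro card_subset_eq) auto
    thus ?thesis unfolding R_def using reach_refl[of Q y] by blast
  qed
  thus ?thesis using y(1) unfolding recurrent_def by blast
qed

lemma unichain_center:
  fixes Q :: "'s::finite \<Rightarrow> 's \<Rightarrow> real"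
  assumes "unichain_mat Q"
  obtains z where "recurrent Q z" "\<And>x. reach Q x z"
proof -
  obtain z where z: "recurrent Q z" using exists_recurrent_reach[of Q] by blast
  have "reach Q x z" for x
  proof -
    obtain y where "reach Q x y" "recurrent Q y" using exists_recurrent_reach[of Q x] by blast
    thus ?thesis using assms z unfolding unichain_mat_def by (meson reach_trans)
  qed
  from that[OF z this] show ?thesis .
qed

lemma solve_restricted:
  fixes Q :: "'s::finite \<Rightarrow> 's \<Rightarrow> real"
  assumes st: "stochastic Q" and reachz: "\<And>x. reach Q x z"
  shows "\<exists>f. f z = 0 \<and> (\<forall>x. x \<noteq> z \<longrightarrow> f x = w x + (\<Sum>y\<in>UNIV. Q x y * f y))"
proof -
  define K :: "real^'s \<Rightarrow> real^'s" where
    "K v = (\<chi> x. if x = z then v$z else v$x - (\<Sum>y\<in>UNIV. Q x y * v$y))" for v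
  have lin: "linear K"
    by (rule linearI) (simp_all add: K_def vec_eq_iff sum.distrib sum_distrib_left algebra_simps)
  have inj: "inj K"
  proof (rule injI)
    fix u v assume eq: "K u = K v"
    define d where "d x = u$x - v$x" for x
    have "K u $ z = K v $ z" using eq by simp
    hence dz: "d z = 0" unfolding K_def d_def by simp
    have dx: "d x = (\<Sum>y\<in>UNIV. Q x y * d y)" if "x \<noteq> z" for x
    proof -
      have "K u $ x = K v $ x" using eq by simp
      hence "u$x - (\<Sum>y\<in>UNIV. Q x y * u$y) = v$x - (\<Sum>y\<in>UNIV. Q x y * v$y)"
        using that unfolding K_def by simp
      thus ?thesis unfolding d_def by (simp add: algebra_simps sum_subtractf)
    qed
    have "d x \<ge> 0" for x
      by (rule min_principle[OF st reachz]) (use dz dx in auto)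
    moreover have "- d x \<ge> 0" for x
      by (rule min_principle[OF st reachz, of "\<lambda>x. - d x"]) (use dz dx in \<open>auto simp: sum_negf\<close>)
    ultimately have "d x = 0" for x by (meson antisym neg_0_le_iff_le)
    thus "u = v" unfolding d_def vec_eq_iff by simp
  qed
  have "surj K" by (rule linear_injective_imp_surjective[OF lin inj]) simp
  then obtain v where v: "K v = (\<chi> x. if x = z then 0 else w x)" by (metis surjD)
  show ?thesis
  proof (intro exI[of _ "\<lambda>x. v$x"] conjI allI impI)
    have "K v $ z = 0" using v by simp
    thus "v$z = 0" unfolding K_def by simp
    fix x assume "x \<noteq> z"
    have "K v $ x = w x" using v \<open>x \<noteq> z\<close> by simp
    hence "v$x - (\<Sum>y\<in>UNIV. Q x y * v$y) = w x"
      using \<open>x \<noteq> z\<close> unfolding K_def by simp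
    thus "v$x = w x + (\<Sum>y\<in>UNIV. Q x y * v$y)" by simp
  qed
qed

lemma stationary_exists:
  fixes Q :: "'s::finite \<Rightarrow> 's \<Rightarrow> real"
  assumes st: "stochastic Q"
  shows "\<exists>mu. (\<forall>x. mu x \<ge> 0) \<and> (\<Sum>x\<in>UNIV. mu x) = 1 \<and> (\<forall>y. (\<Sum>x\<in>UNIV. mu x * Q x y) = mu y)"
proof -
  have Q0: "\<And>x y. Q x y \<ge> 0" and Q1: "\<And>x. (\<Sum>y\<in>UNIV. Q x y) = 1"
    using st unfolding stochastic_def by auto
  define L :: "real^'s \<Rightarrow> real^'s" where
    "L v = (\<chi> x. v$x - (\<Sum>y\<in>UNIV. Q x y * v$y))" for v
  have lin: "linear L"
    by (rule linearI) (simp_all add: L_def vec_eq_iff sum.distrib sum_distrib_left algebra_simps)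
  have L1: "L (\<chi> _. 1) = 0" by (simp add: L_def vec_eq_iff Q1)
  have "((\<chi> _. 1) :: real^'s) \<noteq> 0" by (simp add: vec_eq_iff)
  hence ninj: "\<not> inj L" using L1 linear_0[OF lin] by (metis injD)
  have nsurj: "\<not> surj L" using linear_surjective_imp_injective[OF lin] ninj by auto
  have "dim (range L) < DIM(real^'s)"
  proof -
    have "dim (range L) \<le> DIM(real^'s)" by (rule dim_subset_UNIV)
    moreover have "dim (range L) \<noteq> DIM(real^'s)"
    proof
      assume "dim (range L) = DIM(real^'s)"
      hence "span (range L) = UNIV" by (rule dim_eq_full[THEN iffD1])
      moreover have "span (range L) = range L"
        by (rule span_eq_iff[THEN iffD2]) (rule linear_subspace_image[OF lin subspace_UNIV])
      ultimately show False using nsurj by simp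
    qed
    ultimately show ?thesis by linarith
  qed
  then obtain nu :: "real^'s" where nu: "nu \<noteq> 0" "\<And>y. y \<in> span (range L) \<Longrightarrow> orthogonal nu y"
    by (rule orthogonal_to_subspace_exists) blast
  have nuQ: "(\<Sum>x\<in>UNIV. nu$x * Q x y) = nu$y" for y
  proof -
    have "orthogonal nu (L (axis y 1))" by (rule nu(2)) (simp add: span_base)
    hence "nu \<bullet> L (axis y 1) = 0" by (simp add: orthogonal_def)
    moreover have "L (axis y 1) $ x = (if x = y then 1 else 0) - Q x y" for x
      by (simp add: L_def axis_def if_distrib[of "\<lambda>t. Q x _ * t"] cong: if_cong)
    ultimately have "(\<Sum>x\<in>UNIV. nu$x * ((if x = y then 1 else 0) - Q x y)) = 0"
      by (simp add: inner_vec_def)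
    moreover have "(\<Sum>x\<in>UNIV. nu$x * ((if x = y then 1 else 0) - Q x y))
        = (\<Sum>x\<in>UNIV. (if x = y then nu$x else 0)) - (\<Sum>x\<in>UNIV. nu$x * Q x y)"
      by (subst sum_subtractf[symmetric]) (rule sum.cong, auto simp: algebra_simps)
    ultimately show ?thesis by simp
  qed
  define p where "p x = \<bar>nu$x\<bar>" for x
  have ple: "p y \<le> (\<Sum>x\<in>UNIV. p x * Q x y)" for y
  proof -
    have "p y = \<bar>\<Sum>x\<in>UNIV. nu$x * Q x y\<bar>" unfolding p_def nuQ ..
    also have "\<dots> \<le> (\<Sum>x\<in>UNIV. \<bar>nu$x * Q x y\<bar>)" by (rule sum_abs)
    also have "\<dots> = (\<Sum>x\<in>UNIV. p x * Q x y)" unfolding p_def using Q0 by (simp add: abs_mult)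
    finally show ?thesis .
  qed
  have "(\<Sum>y\<in>UNIV. (\<Sum>x\<in>UNIV. p x * Q x y)) = (\<Sum>x\<in>UNIV. p x * (\<Sum>y\<in>UNIV. Q x y))"
    by (subst sum.swap) (simp add: sum_distrib_left)
  also have "\<dots> = (\<Sum>x\<in>UNIV. p x)" by (simp add: Q1)
  finally have "(\<Sum>y\<in>UNIV. (\<Sum>x\<in>UNIV. p x * Q x y) - p y) = 0" by (simp add: sum_subtractf)
  hence "\<forall>y\<in>UNIV. (\<Sum>x\<in>UNIV. p x * Q x y) - p y = 0"
    using ple by (subst sum_nonneg_eq_0_iff[symmetric]) (auto simp: algebra_simps)
  hence pQ: "(\<Sum>x\<in>UNIV. p x * Q x y) = p y" for y by auto
  have p0: "p x \<ge> 0" for x unfolding p_def by simp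
  obtain x0 where "nu$x0 \<noteq> 0" using nu(1) by (auto simp: vec_eq_iff)
  hence "p x0 > 0" unfolding p_def by simp
  hence Spos: "(\<Sum>x\<in>UNIV. p x) > 0"
    using p0 by (metis (no_types) finite UNIV_I less_le_trans member_le_sum)
  define S where "S = (\<Sum>x\<in>UNIV. p x)"
  show ?thesis
  proof (intro exI[of _ "\<lambda>x. p x / S"] conjI allI)
    show "p x / S \<ge> 0" for x using p0 Spos S_def by simp
    show "(\<Sum>x\<in>UNIV. p x / S) = 1" using Spos S_def by (simp add: sum_divide_distrib[symmetric])
    show "(\<Sum>x\<in>UNIV. p x / S * Q x y) = p y / S" for y
      using pQ[of y] by (simp add: sum_divide_distrib[symmetric])
  qed
qed

lemma stat_pos_center:
  fixes Q :: "'s::finite \<Rightarrow> 's \<Rightarrow> real"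
  assumes st: "stochastic Q" and reachz: "\<And>x. reach Q x z"
  and mu: "\<forall>x. mu x \<ge> 0" "(\<Sum>x\<in>UNIV. mu x) = 1" "\<forall>y. (\<Sum>x\<in>UNIV. mu x * Q x y) = mu y"
  shows "mu z > 0"
proof -
  have Q0: "\<And>x y. Q x y \<ge> 0" using st unfolding stochastic_def by auto
  obtain x0 where "mu x0 \<noteq> 0" using mu(2) by (metis sum.neutral zero_neq_one)
  hence x0: "mu x0 > 0" using mu(1) by (simp add: less_le)
  have "mu y > 0" if "reach Q x0 y" for y
    using that unfolding reach_def
  proof (induction rule: rtrancl_induct)
    case base thus ?case using x0 .
  next
    case (step u v)
    have "mu u * Q u v > 0" using step by simp
    also have "mu u * Q u v \<le> (\<Sum>x\<in>UNIV. mu x * Q x v)"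
      by (rule member_le_sum) (use mu(1) Q0 in auto)
    finally show ?case using mu(3) by simp
  qed
  thus ?thesis using reachz by blast
qed

lemma bias_exists:
  fixes Q :: "'s::finite \<Rightarrow> 's \<Rightarrow> real"
  assumes st: "stochastic Q" and reachz: "\<And>x. reach Q x z"
  and mu: "\<forall>x. mu x \<ge> 0" "(\<Sum>x\<in>UNIV. mu x) = 1" "\<forall>y. (\<Sum>x\<in>UNIV. mu x * Q x y) = mu y"
  and g: "g = (\<Sum>x\<in>UNIV. mu x * rho x)"
  shows "\<exists>b. (\<forall>x. g + b x = rho x + (\<Sum>y\<in>UNIV. Q x y * b y)) \<and> (\<Sum>x\<in>UNIV. mu x * b x) = 0"
proof -
  have Q1: "\<And>x. (\<Sum>y\<in>UNIV. Q x y) = 1" using st unfolding stochastic_def by auto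
  obtain f where fz: "f z = 0" and fx: "\<And>x. x \<noteq> z \<Longrightarrow> f x = (rho x - g) + (\<Sum>y\<in>UNIV. Q x y * f y)"
    using solve_restricted[OF st reachz, of "\<lambda>x. rho x - g"] by blast
  define d where "d x = f x - (rho x - g) - (\<Sum>y\<in>UNIV. Q x y * f y)" for x
  have dx: "d x = (if x = z then d z else 0)" for x using fx unfolding d_def by auto
  have "(\<Sum>x\<in>UNIV. mu x * d x) = (\<Sum>x\<in>UNIV. mu x * f x) - (\<Sum>x\<in>UNIV. mu x * rho x) + g * (\<Sum>x\<in>UNIV. mu x)
      - (\<Sum>x\<in>UNIV. \<Sum>y\<in>UNIV. mu x * Q x y * f y)"
    unfolding d_def by (simp add: algebra_simps sum.distrib sum_subtractf sum_distrib_left sum_distrib_right)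
  also have "(\<Sum>x\<in>UNIV. \<Sum>y\<in>UNIV. mu x * Q x y * f y) = (\<Sum>y\<in>UNIV. mu y * f y)"
    by (subst sum.swap) (simp add: sum_distrib_right[symmetric] mu(3))
  finally have "(\<Sum>x\<in>UNIV. mu x * d x) = 0" using g mu(2) by simp
  moreover have "(\<Sum>x\<in>UNIV. mu x * d x) = mu z * d z"
    by (subst dx) (simp add: if_distrib cong: if_cong)
  ultimately have "d z = 0" using stat_pos_center[OF st reachz mu] by simp
  hence feq: "f x = (rho x - g) + (\<Sum>y\<in>UNIV. Q x y * f y)" for x
    using dx[of x] unfolding d_def by (auto split: if_splits)
  define k where "k = (\<Sum>x\<in>UNIV. mu x * f x)"
  show ?thesis
  proof (intro exI[of _ "\<lambda>x. f x - k"] conjI allI)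
    fix x
    have "(\<Sum>y\<in>UNIV. Q x y * (f y - k)) = (\<Sum>y\<in>UNIV. Q x y * f y) - k * (\<Sum>y\<in>UNIV. Q x y)"
      by (simp add: algebra_simps sum_subtractf sum_distrib_left)
    hence "(\<Sum>y\<in>UNIV. Q x y * (f y - k)) = (\<Sum>y\<in>UNIV. Q x y * f y) - k" using Q1[of x] by simp
    thus "g + (f x - k) = rho x + (\<Sum>y\<in>UNIV. Q x y * (f y - k))" using feq[of x] by simp
  next
    show "(\<Sum>x\<in>UNIV. mu x * (f x - k)) = 0"
      using mu(2) unfolding k_def by (simp add: algebra_simps sum_subtractf sum_distrib_right[symmetric])
  qed
qed

lemma taboo_nonneg:
  assumes "stochastic Q" shows "taboo_pow Q z t x v \<ge> 0"
  using assms unfolding stochastic_def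
  by (induction t arbitrary: v) (auto intro!: sum_nonneg mult_nonneg_nonneg)

lemma taboo_z: "taboo_pow Q z t x z = 0"
  by (cases t) auto

lemma hitting_solution:
  fixes Q :: "'s::finite \<Rightarrow> 's \<Rightarrow> real"
  assumes st: "stochastic Q" and reachz: "\<And>x. reach Q x z"
  obtains h where "h z = 0" "\<And>x. x \<noteq> z \<Longrightarrow> h x = 1 + (\<Sum>y\<in>UNIV. Q x y * h y)"
    "\<And>x. h x \<ge> 0" "\<And>x. hit_time Q x z = h x"
proof -
  obtain h where hz: "h z = 0" and hx: "\<And>x. x \<noteq> z \<Longrightarrow> h x = 1 + (\<Sum>y\<in>UNIV. Q x y * h y)"
    using solve_restricted[OF st reachz, of "\<lambda>_. 1"] by blast
  have h0: "h x \<ge> 0" for x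
    by (rule min_principle[OF st reachz]) (use hz hx in auto)
  have ht: "hit_time Q x z = h x" for x
  proof -
    define a where "a t = (\<Sum>v\<in>UNIV. taboo_pow Q z t x v)" for t
    define R where "R t = (\<Sum>v\<in>UNIV. taboo_pow Q z t x v * h v)" for t
    have iden: "h x = (\<Sum>t<T. a t) + R T" for T
    proof (induction T)
      case 0
      have "R 0 = (\<Sum>v\<in>UNIV. (if v = x then (if x \<noteq> z then h v else 0) else 0))"
        unfolding R_def by (rule sum.cong) auto
      also have "\<dots> = h x" using hz by simp
      finally show ?case by simp
    next
      case (Suc T)
      have "R (Suc T) = (\<Sum>v\<in>UNIV. (\<Sum>w\<in>UNIV. taboo_pow Q z T x w * Q w v) * h v)"
        unfolding R_def by (rule sum.cong) (auto simp: hz)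
      also have "\<dots> = (\<Sum>w\<in>UNIV. taboo_pow Q z T x w * (\<Sum>v\<in>UNIV. Q w v * h v))"
        unfolding sum_distrib_left sum_distrib_right by (subst sum.swap) (simp add: mult.assoc)
      also have "\<dots> = (\<Sum>w\<in>UNIV. taboo_pow Q z T x w * h w - taboo_pow Q z T x w)"
      proof (rule sum.cong)
        fix w show "taboo_pow Q z T x w * (\<Sum>v\<in>UNIV. Q w v * h v) = taboo_pow Q z T x w * h w - taboo_pow Q z T x w"
        proof (cases "w = z")
          case True thus ?thesis by (simp add: taboo_z)
        next
          case False thus ?thesis using hx[OF False] by (simp add: algebra_simps)
        qed
      qed simp
      also have "\<dots> = R T - a T" unfolding R_def a_def by (simp add: sum_subtractf)
      finally show ?case using Suc.IH by simp
    qed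
    have a0: "a t \<ge> 0" for t unfolding a_def by (intro sum_nonneg taboo_nonneg[OF st])
    have R0: "R t \<ge> 0" for t unfolding R_def using h0 by (intro sum_nonneg mult_nonneg_nonneg taboo_nonneg[OF st])
    have "summable a"
      by (rule summableI_nonneg_bounded[of _ "h x"]) (use a0 in simp, metis iden R0 le_add_same_cancel1)
    hence alim: "a \<longlonglongrightarrow> 0" by (rule summable_LIMSEQ_zero)
    define Hs where "Hs = (\<Sum>v\<in>UNIV. h v)"
    have RHs: "R t \<le> a t * Hs" for t
    proof -
      have "R t \<le> (\<Sum>v\<in>UNIV. taboo_pow Q z t x v * Hs)" unfolding R_def
      proof (rule sum_mono)
        fix v
        have "h v \<le> Hs" unfolding Hs_def by (rule member_le_sum) (use h0 in auto)
        thus "taboo_pow Q z t x v * h v \<le> taboo_pow Q z t x v * Hs"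
          by (intro mult_left_mono taboo_nonneg[OF st])
      qed
      also have "(\<Sum>v\<in>UNIV. taboo_pow Q z t x v * Hs) = a t * Hs"
        unfolding a_def by (rule sum_distrib_right[symmetric])
      finally show ?thesis .
    qed
    have "(\<lambda>t. a t * Hs) \<longlonglongrightarrow> 0 * Hs" by (intro tendsto_mult tendsto_const alim)
    hence lim2: "(\<lambda>t. a t * Hs) \<longlonglongrightarrow> 0" by simp
    have "R \<longlonglongrightarrow> 0"
      by (rule tendsto_sandwich[OF _ _ tendsto_const lim2]) (use R0 RHs in auto)
    hence "(\<lambda>T. h x - R T) \<longlonglongrightarrow> h x - 0" by (intro tendsto_diff tendsto_const)
    moreover have "(\<lambda>T. h x - R T) = (\<lambda>T. \<Sum>t<T. a t)" using iden by (auto simp: fun_eq_iff algebra_simps)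
    ultimately have "a sums h x" unfolding sums_def by simp
    thus ?thesis unfolding hit_time_def a_def[symmetric] by (simp add: sums_iff)
  qed
  show ?thesis using that[OF hz hx h0 ht] .
qed

lemma zrs_bound:
  fixes A u :: "'s::finite \<Rightarrow> real"
  assumes "(\<Sum>y\<in>UNIV. A y) = 0" and "\<And>y. \<bar>u y - c\<bar> \<le> K"
  shows "\<bar>\<Sum>y\<in>UNIV. A y * u y\<bar> \<le> (\<Sum>y\<in>UNIV. \<bar>A y\<bar>) * K"
proof -
  have "(\<Sum>y\<in>UNIV. A y * u y) = (\<Sum>y\<in>UNIV. A y * (u y - c)) + c * (\<Sum>y\<in>UNIV. A y)"
    by (simp add: algebra_simps sum.distrib sum_subtractf sum_distrib_left)
  hence "(\<Sum>y\<in>UNIV. A y * u y) = (\<Sum>y\<in>UNIV. A y * (u y - c))" using assms(1) by simp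
  also have "\<bar>\<dots>\<bar> \<le> (\<Sum>y\<in>UNIV. \<bar>A y\<bar> * \<bar>u y - c\<bar>)" by (rule order_trans[OF sum_abs]) (simp add: abs_mult)
  also have "\<dots> \<le> (\<Sum>y\<in>UNIV. \<bar>A y\<bar> * K)" by (intro sum_mono mult_left_mono assms(2)) simp
  finally show ?thesis by (simp add: sum_distrib_right)
qed

lemma span_bound:
  fixes Q :: "'s::finite \<Rightarrow> 's \<Rightarrow> real"
  assumes st: "stochastic Q" and reachz: "\<And>x. reach Q x z"
  and Hz: "H z \<ge> 0" and Hx: "\<And>x. x \<noteq> z \<Longrightarrow> H x \<ge> 1 + (\<Sum>y\<in>UNIV. Q x y * H y)"
  and f: "\<And>x. f x = v x + (\<Sum>y\<in>UNIV. Q x y * f y)" and vm: "\<And>x. \<bar>v x\<bar> \<le> m"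
  shows "\<bar>f x - f z\<bar> \<le> m * H x"
proof -
  have Q1: "\<And>x. (\<Sum>y\<in>UNIV. Q x y) = 1" and Q0: "\<And>x y. Q x y \<ge> 0" using st unfolding stochastic_def by auto
  have m0: "m \<ge> 0" using vm[of z] by linarith
  have QH: "m * (\<Sum>y\<in>UNIV. Q x y * H y) \<le> m * H x - m" if "x \<noteq> z" for x
    using mult_left_mono[OF Hx[OF that] m0] by (simp add: algebra_simps)
  have lin: "(\<Sum>y\<in>UNIV. Q x y * (m * H y - s * (f y - f z))) =
      m * (\<Sum>y\<in>UNIV. Q x y * H y) - s * (\<Sum>y\<in>UNIV. Q x y * f y) + s * f z" for x s
  proof -
    have "(\<Sum>y\<in>UNIV. Q x y * (m * H y - s * (f y - f z))) =
      m * (\<Sum>y\<in>UNIV. Q x y * H y) - s * (\<Sum>y\<in>UNIV. Q x y * f y) + s * f z * (\<Sum>y\<in>UNIV. Q x y)"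
      by (simp add: algebra_simps sum.distrib sum_subtractf sum_distrib_left)
    thus ?thesis using Q1 by simp
  qed
  have gen: "m * H x - s * (f x - f z) \<ge> 0" if s: "s = 1 \<or> s = -1" for s
  proof (rule min_principle[OF st reachz, of "\<lambda>x. m * H x - s * (f x - f z)"])
    show "0 \<le> m * H z - s * (f z - f z)" using Hz m0 by simp
    fix x assume xz: "x \<noteq> z"
    have "s * v x \<le> m" using vm[of x] s by (auto simp: abs_le_iff)
    hence "m * (\<Sum>y\<in>UNIV. Q x y * H y) - s * (\<Sum>y\<in>UNIV. Q x y * f y) + s * f z \<le> m * H x - s * (f x - f z)"
      using QH[OF xz] f[of x] by (simp add: algebra_simps)
    thus "(\<Sum>y\<in>UNIV. Q x y * (m * H y - s * (f y - f z))) \<le> m * H x - s * (f x - f z)"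
      using lin by simp
  qed
  show ?thesis using gen[of 1] gen[of "-1"] by (simp add: abs_le_iff)
qed

lemma pol_stoch: "mdp_stochastic P \<Longrightarrow> stochastic (pol_mat P pol)"
  unfolding mdp_stochastic_def stochastic_def pol_mat_def by auto

lemma reach_same:
  assumes "same_support P Ph" shows "reach (pol_mat Ph pol) x y = reach (pol_mat P pol) x y"
proof -
  have "{(u, v). pol_mat Ph pol u v > 0} = {(u, v). pol_mat P pol u v > 0}"
    using assms unfolding same_support_def pol_mat_def by auto
  thus ?thesis unfolding reach_def by simp
qed

lemma row_le_norm:
  fixes A :: "'s::finite \<Rightarrow> 's \<Rightarrow> real"
  shows "(\<Sum>y\<in>UNIV. \<bar>A x y\<bar>) \<le> mat_inf_norm A"
proof -
  have "{(\<Sum>y\<in>UNIV. \<bar>A x y\<bar>) | x. True} = range (\<lambda>x. \<Sum>y\<in>UNIV. \<bar>A x y\<bar>)" by auto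
  thus ?thesis unfolding mat_inf_norm_def by (simp add: Max_ge)
qed

lemma row_le_dist:
  fixes P Ph :: "bool \<Rightarrow> 's::finite \<Rightarrow> 's \<Rightarrow> real"
  shows "(\<Sum>y\<in>UNIV. \<bar>P c x y - Ph c x y\<bar>) \<le> mdp_dist P Ph"
proof (cases c)
  case True thus ?thesis unfolding mdp_dist_def
    using row_le_norm[of "\<lambda>x y. P True x y - Ph True x y" x] by simp
next
  case False thus ?thesis unfolding mdp_dist_def
    using row_le_norm[of "\<lambda>x y. P False x y - Ph False x y" x] by simp
qed

lemma hit_le_maxdiam:
  fixes P :: "bool \<Rightarrow> 's::finite \<Rightarrow> 's \<Rightarrow> real"
  assumes "recurrent (pol_mat P pol) z"
  shows "hit_time (pol_mat P pol) x z \<le> max_diameter P"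
proof -
  let ?Q = "pol_mat P pol"
  have "{hit_time ?Q x y | x y. recurrent ?Q y} \<subseteq> (\<lambda>p. hit_time ?Q (fst p) (snd p)) ` UNIV"
    by (auto simp: image_iff) (metis fst_conv snd_conv)
  hence fin: "finite {hit_time ?Q x y | x y. recurrent ?Q y}" by (rule finite_subset) simp
  have "hit_time ?Q x z \<le> Defs.diameter ?Q" unfolding Defs.diameter_def
    by (rule Max_ge[OF fin]) (use assms in blast)
  also have "Defs.diameter ?Q \<le> max_diameter P"
  proof -
    have "{Defs.diameter (pol_mat P pol) | pol. True} = range (\<lambda>pol. Defs.diameter (pol_mat P pol))" by auto
    thus ?thesis unfolding max_diameter_def by (simp add: Max_ge)
  qed
  finally show ?thesis .
qed

lemma stat_dist_props:
  fixes Q :: "'s::finite \<Rightarrow> 's \<Rightarrow> real"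
  assumes "stochastic Q"
  shows "(\<forall>x. stat_dist Q x \<ge> 0) \<and> (\<Sum>x\<in>UNIV. stat_dist Q x) = 1 \<and>
         (\<forall>y. (\<Sum>x\<in>UNIV. stat_dist Q x * Q x y) = stat_dist Q y)"
proof -
  have ex: "\<exists>mu. (\<forall>x. mu x \<ge> 0) \<and> (\<Sum>x\<in>UNIV. mu x) = 1 \<and> (\<forall>y. (\<Sum>x\<in>UNIV. mu x * Q x y) = mu y)"
    by (rule stationary_exists[OF assms])
  show ?thesis unfolding stat_dist_def by (rule someI_ex[OF ex])
qed

lemma bias_props:
  fixes P :: "bool \<Rightarrow> 's::finite \<Rightarrow> 's \<Rightarrow> real"
  assumes st: "stochastic (pol_mat P pol)" and reachz: "\<And>x. reach (pol_mat P pol) x z"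
  shows "\<forall>x. gain P r lam pol + bias P r lam pol x = pol_rew r lam pol x +
            (\<Sum>y\<in>UNIV. pol_mat P pol x y * bias P r lam pol y)"
proof -
  let ?Q = "pol_mat P pol"
  have mu: "\<forall>x. stat_dist ?Q x \<ge> 0" "(\<Sum>x\<in>UNIV. stat_dist ?Q x) = 1"
    "\<forall>y. (\<Sum>x\<in>UNIV. stat_dist ?Q x * ?Q x y) = stat_dist ?Q y"
    using stat_dist_props[OF st] by auto
  have ex: "\<exists>b. (\<forall>x. gain P r lam pol + b x = pol_rew r lam pol x + (\<Sum>y\<in>UNIV. ?Q x y * b y)) \<and>
      (\<Sum>x\<in>UNIV. stat_dist ?Q x * b x) = 0"
    by (rule bias_exists[OF st reachz mu]) (simp add: gain_def)
  have "(\<forall>x. gain P r lam pol + bias P r lam pol x = pol_rew r lam pol x + (\<Sum>y\<in>UNIV. ?Q x y * bias P r lam pol y)) \<and>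
      (\<Sum>x\<in>UNIV. stat_dist ?Q x * bias P r lam pol x) = 0"
    unfolding bias_def by (rule someI_ex[OF ex])
  thus ?thesis by blast
qed



lemma main_bound:
  fixes P Ph :: "bool \<Rightarrow> 's::finite \<Rightarrow> 's \<Rightarrow> real" and r :: "bool \<Rightarrow> 's \<Rightarrow> real"
  assumes sP: "mdp_stochastic P" and sPh: "mdp_stochastic Ph" and ss: "same_support P Ph"
  and uni: "unichain P" and dA: "mdp_dist P Ph \<le> 1 / max_diameter P"
  and lam: "\<bar>lam\<bar> \<le> L0"
  defines "R0 \<equiv> (\<Sum>x\<in>UNIV. \<bar>r True x\<bar> + \<bar>r False x\<bar>) + L0"
  defines "Dm \<equiv> max_diameter P"
  defines "B \<equiv> 2 * R0 * Dm"
  shows "\<bar>adv P r pol s lam - adv Ph r pol s lam\<bar> \<le> (8 * B * Dm + 10 * B) * mdp_dist P Ph"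
proof -
  define Q where "Q = pol_mat P pol"
  define Qh where "Qh = pol_mat Ph pol"
  define \<delta> where "\<delta> = mdp_dist P Ph"
  have stQ: "stochastic Q" unfolding Q_def by (rule pol_stoch[OF sP])
  have stQh: "stochastic Qh" unfolding Qh_def by (rule pol_stoch[OF sPh])
  have Q0: "\<And>x y. Q x y \<ge> 0" and Q1: "\<And>x. (\<Sum>y\<in>UNIV. Q x y) = 1" using stQ unfolding stochastic_def by auto
  have Qh0: "\<And>x y. Qh x y \<ge> 0" and Qh1: "\<And>x. (\<Sum>y\<in>UNIV. Qh x y) = 1" using stQh unfolding stochastic_def by auto
  have "unichain_mat Q" using uni unfolding unichain_def Q_def by blast
  then obtain z where zrec: "recurrent Q z" and reachz: "\<And>x. reach Q x z" by (rule unichain_center) blast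
  have reachzh: "reach Qh x z" for x using reachz[of x] reach_same[OF ss] unfolding Q_def Qh_def by simp
  obtain h where hz: "h z = 0" and hx: "\<And>x. x \<noteq> z \<Longrightarrow> h x = 1 + (\<Sum>y\<in>UNIV. Q x y * h y)"
    and h0: "\<And>x. h x \<ge> 0" and ht: "\<And>x. hit_time Q x z = h x"
    by (rule hitting_solution[OF stQ reachz]) blast
  have hD: "h x \<le> Dm" for x
    using hit_le_maxdiam[of P pol z x] zrec ht[of x] unfolding Q_def Dm_def by simp
  have Dm0: "Dm \<ge> 0" using hD[of z] hz by simp
  have rowQ: "(\<Sum>y\<in>UNIV. \<bar>Q x y - Qh x y\<bar>) \<le> \<delta>" for x
    unfolding Q_def Qh_def pol_mat_def \<delta>_def by (rule row_le_dist)
  have rowP: "(\<Sum>y\<in>UNIV. \<bar>P c x y - Ph c x y\<bar>) \<le> \<delta>" for c x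
    unfolding \<delta>_def by (rule row_le_dist)
  have "0 \<le> (\<Sum>y\<in>UNIV. \<bar>Q z y - Qh z y\<bar>)" by (rule sum_nonneg) simp
  hence d0: "\<delta> \<ge> 0" using rowQ[of z] by linarith
  have dDm: "\<delta> * Dm \<le> 1"
  proof (cases "Dm = 0")
    case True thus ?thesis by simp
  next
    case False
    hence "Dm > 0" using Dm0 by simp
    have "\<delta> * Dm \<le> (1 / Dm) * Dm" using dA \<open>Dm > 0\<close> unfolding \<delta>_def Dm_def
      by (intro mult_right_mono) auto
    thus ?thesis using \<open>Dm > 0\<close> by simp
  qed
  have H2: "1 + (\<Sum>y\<in>UNIV. Qh x y * (2 * h y)) \<le> 2 * h x" if xz: "x \<noteq> z" for x
  proof -
    define E where "E = (\<Sum>y\<in>UNIV. (Qh x y - Q x y) * h y)"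
    have "(\<Sum>y\<in>UNIV. Qh x y - Q x y) = 0" using Q1[of x] Qh1[of x] by (simp add: sum_subtractf)
    moreover have "\<bar>h y - Dm / 2\<bar> \<le> Dm / 2" for y unfolding abs_le_iff using h0[of y] hD[of y] by linarith
    ultimately have "\<bar>E\<bar> \<le> (\<Sum>y\<in>UNIV. \<bar>Qh x y - Q x y\<bar>) * (Dm / 2)"
      unfolding E_def by (rule zrs_bound)
    also have "\<dots> \<le> \<delta> * (Dm / 2)"
      using rowQ[of x] Dm0 by (intro mult_right_mono) (simp_all add: abs_minus_commute)
    finally have E: "\<bar>E\<bar> \<le> \<delta> * Dm / 2" by simp
    have "(\<Sum>y\<in>UNIV. Qh x y * (2 * h y)) = 2 * (\<Sum>y\<in>UNIV. Q x y * h y) + 2 * E"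
      unfolding E_def by (simp add: algebra_simps sum.distrib sum_subtractf sum_distrib_left)
    thus ?thesis using hx[OF xz] E dDm by (simp add: abs_le_iff)
  qed
  define rho where "rho = pol_rew r lam pol"
  have R0: "\<bar>rho x\<bar> \<le> R0" for x
  proof -
    have "\<bar>r True x\<bar> + \<bar>r False x\<bar> \<le> (\<Sum>x\<in>UNIV. \<bar>r True x\<bar> + \<bar>r False x\<bar>)"
      by (rule member_le_sum) auto
    moreover have "\<bar>rho x\<bar> \<le> \<bar>r True x\<bar> + \<bar>r False x\<bar> + \<bar>lam\<bar>"
    proof (cases "x \<in> pol")
      case True
      hence "rho x = r True x - lam" unfolding rho_def pol_rew_def by simp
      moreover have "\<bar>r True x - lam\<bar> \<le> \<bar>r True x\<bar> + \<bar>lam\<bar>" by (rule abs_triangle_ineq4)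
      ultimately show ?thesis using abs_ge_zero[of "r False x"] by linarith
    next
      case False
      hence "rho x = r False x" unfolding rho_def pol_rew_def by simp
      thus ?thesis using abs_ge_zero[of "r True x"] abs_ge_zero[of lam] by linarith
    qed
    ultimately show ?thesis unfolding R0_def using lam by linarith
  qed
  have R00: "R0 \<ge> 0" using R0[of z] by linarith
  have B0: "B \<ge> 0" unfolding B_def using R00 Dm0 by simp
  define mu where "mu = stat_dist Q"
  have mu: "\<forall>x. mu x \<ge> 0" "(\<Sum>x\<in>UNIV. mu x) = 1" using stat_dist_props[OF stQ] unfolding mu_def by auto
  define g where "g = gain P r lam pol"
  have gdef: "g = (\<Sum>x\<in>UNIV. mu x * rho x)" unfolding g_def gain_def mu_def Q_def rho_def ..
  have gb: "\<bar>g\<bar> \<le> R0"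
  proof -
    have "\<bar>g\<bar> \<le> (\<Sum>x\<in>UNIV. \<bar>mu x * rho x\<bar>)" unfolding gdef by (rule sum_abs)
    also have "\<dots> \<le> (\<Sum>x\<in>UNIV. mu x * R0)"
      using mu(1) R0 by (intro sum_mono) (simp add: abs_mult mult_left_mono)
    also have "\<dots> = R0" using mu(2) by (simp add: sum_distrib_right[symmetric])
    finally show ?thesis .
  qed
  define b where "b = bias P r lam pol"
  have beq: "b x = (rho x - g) + (\<Sum>y\<in>UNIV. Q x y * b y)" for x
    using bias_props[of P pol z r lam] stQ reachz unfolding Q_def b_def g_def rho_def
    by (metis add_diff_cancel_left' add_diff_eq diff_add_eq)
  have bspan: "\<bar>b x - b z\<bar> \<le> B" for x
  proof -
    have "\<bar>b x - b z\<bar> \<le> (2 * R0) * h x"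
    proof (rule span_bound[OF stQ reachz, of h b "\<lambda>x. rho x - g"])
      show "0 \<le> h z" using hz by simp
      show "\<And>x. x \<noteq> z \<Longrightarrow> 1 + (\<Sum>y\<in>UNIV. Q x y * h y) \<le> h x" using hx by simp
      show "\<And>x. b x = (rho x - g) + (\<Sum>y\<in>UNIV. Q x y * b y)" by (rule beq)
      fix x
      show "\<bar>rho x - g\<bar> \<le> 2 * R0" using R0[of x] gb abs_triangle_ineq4[of "rho x" g] by linarith
    qed
    also have "\<dots> \<le> (2 * R0) * Dm" using hD[of x] R00 by (intro mult_left_mono) auto
    finally show ?thesis unfolding B_def .
  qed
  define muh where "muh = stat_dist Qh"
  have muh: "\<forall>x. muh x \<ge> 0" "(\<Sum>x\<in>UNIV. muh x) = 1" "\<forall>y. (\<Sum>x\<in>UNIV. muh x * Qh x y) = muh y"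
    using stat_dist_props[OF stQh] unfolding muh_def by auto
  define gh where "gh = gain Ph r lam pol"
  define bh where "bh = bias Ph r lam pol"
  have bheq: "bh x = (rho x - gh) + (\<Sum>y\<in>UNIV. Qh x y * bh y)" for x
    using bias_props[of Ph pol z r lam] stQh reachzh unfolding Qh_def bh_def gh_def rho_def
    by (metis add_diff_cancel_left' add_diff_eq diff_add_eq)
  define e where "e x = b x - bh x" for x
  define w where "w x = (\<Sum>y\<in>UNIV. (Q x y - Qh x y) * b y)" for x
  have wb: "\<bar>w x\<bar> \<le> \<delta> * B" for x
  proof -
    have "(\<Sum>y\<in>UNIV. Q x y - Qh x y) = 0" using Q1[of x] Qh1[of x] by (simp add: sum_subtractf)
    hence "\<bar>w x\<bar> \<le> (\<Sum>y\<in>UNIV. \<bar>Q x y - Qh x y\<bar>) * B"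
      unfolding w_def using bspan by (rule zrs_bound)
    also have "\<dots> \<le> \<delta> * B" using rowQ[of x] B0 by (rule mult_right_mono)
    finally show ?thesis .
  qed
  have eeq: "e x = ((gh - g) + w x) + (\<Sum>y\<in>UNIV. Qh x y * e y)" for x
  proof -
    have "(\<Sum>y\<in>UNIV. Qh x y * e y) = (\<Sum>y\<in>UNIV. Qh x y * b y) - (\<Sum>y\<in>UNIV. Qh x y * bh y)"
      unfolding e_def by (simp add: algebra_simps sum_subtractf)
    moreover have "w x = (\<Sum>y\<in>UNIV. Q x y * b y) - (\<Sum>y\<in>UNIV. Qh x y * b y)"
      unfolding w_def by (simp add: algebra_simps sum_subtractf)
    ultimately show ?thesis unfolding e_def using beq[of x] bheq[of x] by simp
  qed
  have ggh: "\<bar>gh - g\<bar> \<le> \<delta> * B"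
  proof -
    have swap: "(\<Sum>x\<in>UNIV. muh x * (\<Sum>y\<in>UNIV. Qh x y * e y)) = (\<Sum>y\<in>UNIV. muh y * e y)"
      unfolding sum_distrib_left by (subst sum.swap) (simp add: mult.assoc[symmetric] sum_distrib_right[symmetric] muh(3))
    have "(\<Sum>x\<in>UNIV. muh x * e x) = (\<Sum>x\<in>UNIV. muh x * ((gh - g) + w x)) + (\<Sum>x\<in>UNIV. muh x * (\<Sum>y\<in>UNIV. Qh x y * e y))"
    proof -
      have "(\<Sum>x\<in>UNIV. muh x * e x) = (\<Sum>x\<in>UNIV. muh x * ((gh - g) + w x) + muh x * (\<Sum>y\<in>UNIV. Qh x y * e y))"
      proof (rule sum.cong)
        fix x show "muh x * e x = muh x * ((gh - g) + w x) + muh x * (\<Sum>y\<in>UNIV. Qh x y * e y)"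
          using eeq[of x] by (simp add: distrib_left[symmetric])
      qed simp
      thus ?thesis by (simp add: sum.distrib)
    qed
    hence "(\<Sum>x\<in>UNIV. muh x * ((gh - g) + w x)) = 0" using swap by simp
    moreover have "(\<Sum>x\<in>UNIV. muh x * ((gh - g) + w x)) = (gh - g) + (\<Sum>x\<in>UNIV. muh x * w x)"
    proof -
      have "(\<Sum>x\<in>UNIV. muh x * ((gh - g) + w x)) = (\<Sum>x\<in>UNIV. muh x * (gh - g)) + (\<Sum>x\<in>UNIV. muh x * w x)"
        by (simp add: distrib_left sum.distrib)
      also have "(\<Sum>x\<in>UNIV. muh x * (gh - g)) = (\<Sum>x\<in>UNIV. muh x) * (gh - g)" by (rule sum_distrib_right[symmetric])
      finally show ?thesis using muh(2) by simp
    qed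
    ultimately have "gh - g = - (\<Sum>x\<in>UNIV. muh x * w x)" by simp
    hence "\<bar>gh - g\<bar> \<le> (\<Sum>x\<in>UNIV. \<bar>muh x * w x\<bar>)" by (simp add: sum_abs)
    also have "\<dots> \<le> (\<Sum>x\<in>UNIV. muh x * (\<delta> * B))"
      using muh(1) wb by (intro sum_mono) (simp add: abs_mult mult_left_mono)
    also have "\<dots> = \<delta> * B" using muh(2) by (simp add: sum_distrib_right[symmetric])
    finally show ?thesis .
  qed
  define E where "E = 4 * \<delta> * B * Dm"
  have espan: "\<bar>e x - e z\<bar> \<le> E" for x
  proof -
    have "\<bar>e x - e z\<bar> \<le> (2 * \<delta> * B) * (2 * h x)"
    proof (rule span_bound[OF stQh reachzh, of "\<lambda>x. 2 * h x" e "\<lambda>x. (gh - g) + w x"])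
      show "0 \<le> 2 * h z" using hz by simp
      show "\<And>x. x \<noteq> z \<Longrightarrow> 1 + (\<Sum>y\<in>UNIV. Qh x y * (2 * h y)) \<le> 2 * h x" by (rule H2)
      show "\<And>x. e x = (gh - g + w x) + (\<Sum>y\<in>UNIV. Qh x y * e y)" by (rule eeq)
      fix x show "\<bar>gh - g + w x\<bar> \<le> 2 * \<delta> * B"
        using ggh wb[of x] abs_triangle_ineq[of "gh - g" "w x"] by linarith
    qed
    also have "\<dots> \<le> (2 * \<delta> * B) * (2 * Dm)" using hD[of x] d0 B0 by (intro mult_left_mono) auto
    finally show ?thesis unfolding E_def by simp
  qed
  have EB: "E \<le> 4 * B"
  proof -
    have "E = 4 * B * (\<delta> * Dm)" unfolding E_def by simp
    also have "\<dots> \<le> 4 * B * 1" using dDm B0 by (intro mult_left_mono) auto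
    finally show ?thesis by simp
  qed
  define A1 where "A1 y = P True s y - P False s y" for y
  define A2 where "A2 y = (P True s y - Ph True s y) - (P False s y - Ph False s y)" for y
  have diff: "adv P r pol s lam - adv Ph r pol s lam = (\<Sum>y\<in>UNIV. A1 y * e y) + (\<Sum>y\<in>UNIV. A2 y * bh y)"
  proof -
    have "adv P r pol s lam - adv Ph r pol s lam =
        (\<Sum>y\<in>UNIV. (P True s y - P False s y) * b y) - (\<Sum>y\<in>UNIV. (Ph True s y - Ph False s y) * bh y)"
      unfolding adv_def b_def bh_def by simp
    also have "\<dots> = (\<Sum>y\<in>UNIV. (P True s y - P False s y) * b y - (Ph True s y - Ph False s y) * bh y)"
      by (simp add: sum_subtractf)
    also have "\<dots> = (\<Sum>y\<in>UNIV. A1 y * e y + A2 y * bh y)"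
      by (rule sum.cong) (auto simp: A1_def A2_def e_def algebra_simps)
    finally show ?thesis by (simp add: sum.distrib)
  qed
  have sP1: "(\<Sum>y\<in>UNIV. P c x y) = 1" "\<And>y. P c x y \<ge> 0" for c x
    using sP unfolding mdp_stochastic_def stochastic_def by auto
  have sPh1: "(\<Sum>y\<in>UNIV. Ph c x y) = 1" for c x
    using sPh unfolding mdp_stochastic_def stochastic_def by auto
  have T1: "\<bar>\<Sum>y\<in>UNIV. A1 y * e y\<bar> \<le> 2 * E"
  proof -
    have "(\<Sum>y\<in>UNIV. A1 y) = 0" unfolding A1_def using sP1 by (simp add: sum_subtractf)
    hence "\<bar>\<Sum>y\<in>UNIV. A1 y * e y\<bar> \<le> (\<Sum>y\<in>UNIV. \<bar>A1 y\<bar>) * E" using espan by (rule zrs_bound)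
    also have "(\<Sum>y\<in>UNIV. \<bar>A1 y\<bar>) \<le> (\<Sum>y\<in>UNIV. P True s y + P False s y)"
      unfolding A1_def
    proof (rule sum_mono)
      fix y show "\<bar>P True s y - P False s y\<bar> \<le> P True s y + P False s y"
        using sP1(2)[of True s y] sP1(2)[of False s y] unfolding abs_le_iff by linarith
    qed
    also have "\<dots> = 2" using sP1(1) by (simp add: sum.distrib)
    finally show ?thesis using espan[of z] by (simp add: mult_right_mono)
  qed
  have T2: "\<bar>\<Sum>y\<in>UNIV. A2 y * bh y\<bar> \<le> 2 * \<delta> * (5 * B)"
  proof -
    have "(\<Sum>y\<in>UNIV. A2 y) = 0" unfolding A2_def using sP1 sPh1 by (simp add: sum_subtractf)
    moreover have "\<bar>bh y - (b z - e z)\<bar> \<le> 5 * B" for y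
      using bspan[of y] espan[of y] EB unfolding e_def abs_le_iff by linarith
    ultimately have "\<bar>\<Sum>y\<in>UNIV. A2 y * bh y\<bar> \<le> (\<Sum>y\<in>UNIV. \<bar>A2 y\<bar>) * (5 * B)" by (rule zrs_bound)
    also have "(\<Sum>y\<in>UNIV. \<bar>A2 y\<bar>) \<le> (\<Sum>y\<in>UNIV. \<bar>P True s y - Ph True s y\<bar> + \<bar>P False s y - Ph False s y\<bar>)"
      unfolding A2_def by (intro sum_mono) (rule order_trans[OF abs_triangle_ineq4], simp)
    also have "\<dots> \<le> 2 * \<delta>" using rowP[of True s] rowP[of False s] by (simp add: sum.distrib)
    finally show ?thesis using B0 by (simp add: mult_right_mono)
  qed
  have "\<bar>adv P r pol s lam - adv Ph r pol s lam\<bar> \<le> 2 * E + 2 * \<delta> * (5 * B)"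
    using diff T1 T2 abs_triangle_ineq[of "\<Sum>y\<in>UNIV. A1 y * e y" "\<Sum>y\<in>UNIV. A2 y * bh y"] by linarith
  also have "\<dots> = (8 * B * Dm + 10 * B) * \<delta>" unfolding E_def by (simp add: algebra_simps)
  finally show ?thesis unfolding \<delta>_def .
qed

theorem mainTheorem6:
  fixes P :: "bool \<Rightarrow> 's::finite \<Rightarrow> 's \<Rightarrow> real" and r :: "bool \<Rightarrow> 's \<Rightarrow> real"
    and a b :: real
  assumes "mdp_stochastic P" and "unichain P" and "indexable P r" and "a \<le> b"
  shows "\<exists>c::real. \<forall>Ph :: bool \<Rightarrow> 's \<Rightarrow> 's \<Rightarrow> real.
           mdp_stochastic Ph \<and> same_support P Ph \<and> assumption_A P r Ph \<longrightarrow>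
           (\<forall>s pol. \<forall>lam\<in>{a..b}. \<bar>adv P r pol s lam - adv Ph r pol s lam\<bar> \<le> c * mdp_dist P Ph)"
proof -
  define L0 where "L0 = \<bar>a\<bar> + \<bar>b\<bar>"
  define R0 where "R0 = (\<Sum>x\<in>UNIV. \<bar>r True x\<bar> + \<bar>r False x\<bar>) + L0"
  define Dm where "Dm = max_diameter P"
  define B where "B = 2 * R0 * Dm"
  show ?thesis
  proof (intro exI[of _ "8 * B * Dm + 10 * B"] allI impI ballI)
    fix Ph :: "bool \<Rightarrow> 's \<Rightarrow> 's \<Rightarrow> real" and s pol lam
    assume H: "mdp_stochastic Ph \<and> same_support P Ph \<and> assumption_A P r Ph" and lam: "lam \<in> {a..b}"
    have dA: "mdp_dist P Ph \<le> 1 / max_diameter P" using H unfolding assumption_A_def by blast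
    have "\<bar>lam\<bar> \<le> L0" using lam unfolding L0_def by auto
    from main_bound[OF assms(1) _ _ assms(2) dA this, where r=r and pol=pol and s=s] H
    show "\<bar>adv P r pol s lam - adv Ph r pol s lam\<bar> \<le> (8 * B * Dm + 10 * B) * mdp_dist P Ph"
      unfolding B_def R0_def Dm_def by blast
  qed
qed

end
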